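(* Suppose Assumptions 1 and 2 hold and the inverse demand function $p$ is convex. If $\mathbf{x}$ is a Cournot candidate with $X=\sum_{n=1}^N x_n>0$, then $p$ is differentiable at $X$, i.e., $\partial_-p(X)=\partial_+p(X)$.
   Context: Cournot model: $N$ suppliers, inverse demand $p:[0,\infty)\to[0,\infty)$, supplier $n$ has cost $C_n:[0,\infty)\to[0,\infty)$ and chooses $x_n\ge0$; $X=\sum_n x_n$. $\partial_\pm$ denote right/left derivatives; $C_n'(0)$ is the right derivative at $0$. Assumption 1: each $C_n$ is convex, continuous, nondecreasing on $[0,\infty)$, continuously differentiable on $(0,\infty)$, with $C_n(0)=0$. Assumption 2: $p$ is continuous, nonnegative, nonincreasing, $p(0)>0$; its right derivative at $0$ exists and at every $q>0$ its left and right derivatives exist. A nonnegative vector $\mathbf{x}$ is a Cournot candidate if for every $n$: $C_n'(x_n)\le p(X)+x_n\,\partial_-p(X)$ whenever $x_n>0$, and $C_n'(x_n)\ge p(X)+x_n\,\partial_+p(X)$. *)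

theory Defs
  imports "HOL-Analysis.Analysis"
begin

definition right_deriv :: "(real \<Rightarrow> real) \<Rightarrow> real \<Rightarrow> real \<Rightarrow> bool" where
  "right_deriv f x D \<longleftrightarrow> (f has_real_derivative D) (at x within {x..})"

definition left_deriv :: "(real \<Rightarrow> real) \<Rightarrow> real \<Rightarrow> real \<Rightarrow> bool" where
  "left_deriv f x D \<longleftrightarrow> (f has_real_derivative D) (at x within {..x})"

definition cost_ok :: "(real \<Rightarrow> real) \<Rightarrow> (real \<Rightarrow> real) \<Rightarrow> bool" where
  "cost_ok C C' \<longleftrightarrow>
     convex_on {0..} C \<and> continuous_on {0..} C \<and> mono_on {0..} C \<and> C 0 = 0 \<and>
     (\<forall>x\<ge>0. C x \<ge> 0) \<and>
     (\<forall>x>0. (C has_real_derivative C' x) (at x)) \<and> continuous_on {0<..} C' \<and>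
     right_deriv C 0 (C' 0)"

definition demand_ok :: "(real \<Rightarrow> real) \<Rightarrow> (real \<Rightarrow> real) \<Rightarrow> (real \<Rightarrow> real) \<Rightarrow> bool" where
  "demand_ok p dp_plus dp_minus \<longleftrightarrow>
     continuous_on {0..} p \<and> (\<forall>q\<ge>0. p q \<ge> 0) \<and> antimono_on {0..} p \<and> p 0 > 0 \<and>
     right_deriv p 0 (dp_plus 0) \<and>
     (\<forall>q>0. right_deriv p q (dp_plus q) \<and> left_deriv p q (dp_minus q))"

definition cournot_candidate ::
  "nat \<Rightarrow> (real \<Rightarrow> real) \<Rightarrow> (real \<Rightarrow> real) \<Rightarrow> (real \<Rightarrow> real) \<Rightarrow> (nat \<Rightarrow> real \<Rightarrow> real) \<Rightarrow> (nat \<Rightarrow> real) \<Rightarrow> bool" where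
  "cournot_candidate N p dp_plus dp_minus C' x \<longleftrightarrow>
     (\<forall>n<N. x n \<ge> 0) \<and>
     (let X = (\<Sum>n<N. x n) in
       \<forall>n<N. (x n > 0 \<longrightarrow> C' n (x n) \<le> p X + x n * dp_minus X) \<and>
              C' n (x n) \<ge> p X + x n * dp_plus X)"

end

theory Submission
  imports Defs
begin

lemma left_le_right:
  fixes p :: "real \<Rightarrow> real"
  assumes cvx: "convex_on {0..} p" and X: "X > 0"
    and L: "left_deriv p X Dm" and R: "right_deriv p X Dp"
  shows "Dm \<le> Dp"
proof -
  have Lt: "((\<lambda>y. (p y - p X) / (y - X)) \<longlongrightarrow> Dm) (at_left X)"
    using L unfolding left_deriv_def has_field_derivative_iff
    by (rule tendsto_within_subset) auto
  have Rt: "((\<lambda>y. (p y - p X) / (y - X)) \<longlongrightarrow> Dp) (at_right X)"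
    using R unfolding right_deriv_def has_field_derivative_iff
    by (rule tendsto_within_subset) auto
  have bnd: "Dm \<le> (p b - p X) / (b - X)" if b: "b > X" for b
  proof (rule tendsto_le[OF trivial_limit_at_left_real tendsto_const Lt])
    have "eventually (\<lambda>y. y \<in> {0<..<X}) (at_left X)"
      using X by (rule eventually_at_left_real)
    then show "eventually (\<lambda>y. (p y - p X) / (y - X) \<le> (p b - p X) / (b - X)) (at_left X)"
    proof eventually_elim
      case (elim y)
      then have y: "0 < y" "y < X" by auto
      have "(p y - p X) / (y - X) \<le> (p y - p b) / (y - b)"
        using convex_on_slope_le(1)[OF cvx, of y b X] y b by auto
      also have "\<dots> \<le> (p X - p b) / (X - b)"
        using convex_on_slope_le(2)[OF cvx, of y b X] y b by auto
      also have "\<dots> = (p b - p X) / (b - X)"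
        by (simp add: divide_simps algebra_simps)
      finally show ?case .
    qed
  qed
  show ?thesis
  proof (rule tendsto_le[OF trivial_limit_at_right_real Rt tendsto_const])
    show "eventually (\<lambda>y. Dm \<le> (p y - p X) / (y - X)) (at_right X)"
      by (simp add: eventually_at_filter bnd)
  qed
qed

theorem proposition3:
  fixes N :: nat and p dp_plus dp_minus :: "real \<Rightarrow> real"
    and C C' :: "nat \<Rightarrow> real \<Rightarrow> real" and x :: "nat \<Rightarrow> real"
  assumes A1: "\<forall>n<N. cost_ok (C n) (C' n)"
    and A2: "demand_ok p dp_plus dp_minus"
    and cvx: "convex_on {0..} p"
    and cand: "cournot_candidate N p dp_plus dp_minus C' x"
    and Xpos: "(\<Sum>n<N. x n) > 0"
  shows "dp_minus (\<Sum>n<N. x n) = dp_plus (\<Sum>n<N. x n)"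
proof -
  define X where "X = (\<Sum>n<N. x n)"
  have X: "X > 0" using Xpos X_def by simp
  obtain n where n: "n < N" "x n > 0"
  proof (rule ccontr)
    assume "\<not> thesis"
    with that have "\<forall>n<N. x n \<le> 0" by force
    then have "X \<le> 0" unfolding X_def by (intro sum_nonpos) auto
    with X show False by simp
  qed
  have c: "C' n (x n) \<le> p X + x n * dp_minus X" "C' n (x n) \<ge> p X + x n * dp_plus X"
    using cand n unfolding cournot_candidate_def X_def Let_def by auto
  then have "x n * dp_plus X \<le> x n * dp_minus X" by simp
  then have ge: "dp_plus X \<le> dp_minus X" using n(2) by simp
  have "dp_minus X \<le> dp_plus X"
    using A2 X unfolding demand_ok_def by (intro left_le_right[OF cvx X]) auto
  with ge show ?thesis unfolding X_def by simp
qed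

end
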